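(* Let $n\ge1$ and $I,J\subseteq[n-1]$. Then (a) $M_{\mathrm{comp}(I)}=\sum_{J\subseteq[n-1]:\,I\cup J=[n-1]}(-\nu)^{|J\setminus I|}(\nu-1)^{|I\cap J|}\Pi(\nu)_{\mathrm{comp}(J)}$; (b) $\Pi(\nu)_{\mathrm{comp}(J)}=\left(\frac{1}{1-\nu}\right)^{|J|}\sum_{I\subseteq[n-1]:\,I\cap J=\emptyset}\left(\frac{\nu-1}{\nu}\right)^{(n-1)-|I|}M_{\mathrm{comp}(I)}$.
   Context: Fix an integer $\nu>1$; $C_\nu$ is the additive cyclic group of order $\nu$; $Q_n(\nu)=\bigoplus_{i\in[n-1]}C_\nu$. $\psi_\nu(0)=1$, $\psi_\nu(g)=-1/(\nu-1)$ for $g\ne0$. For $I\subseteq[n-1]$, $\dot\chi^I(\nu)(\mathbf g)=\prod_{i\in[n-1]\setminus I}\psi_\nu(g_i)$, and $\kappa_I(\nu)$ is the indicator function of $\{\mathbf g:\{i:g_i\ne0\}=I\}$. $\mathrm{scf}(\mathcal N_n(\nu))$ is the span of the $\kappa_I(\nu)$ (also spanned by the $\dot\chi^I(\nu)$). $\mathrm{comp}(\{s_1<\dots<s_i\})=(s_1,s_2-s_1,\dots,n-s_i)$; $M_\alpha$ are the monomial quasisymmetric functions and $L_{\mathrm{comp}(I)}=\sum_{I\subseteq J\subseteq[n-1]}M_{\mathrm{comp}(J)}$. $\mathrm{ch}^n_\nu:\mathrm{scf}(\mathcal N_n(\nu))\to\mathsf{QSym}_n$ is the linear map $\dot\chi^I(\nu)\mapsto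 L_{\mathrm{comp}(I)}$, and $\Pi(\nu)_{\mathrm{comp}(I)}:=\mathrm{ch}^n_\nu\big(\kappa_I(\nu)/(\nu-1)^{|I|}\big)$. *)

theory Defs
  imports Main "HOL-Library.Multiset" Complex_Main
begin

text \<open>Q_n(nu): vectors g indexed by [n-1] = {1..<n} with entries in C_nu = {0..<nu};
  represented as functions nat => nat vanishing outside {1..<n}.\<close>
definition Qcar :: "nat \<Rightarrow> nat \<Rightarrow> (nat \<Rightarrow> nat) set" where
  "Qcar \<nu> n = {g. (\<forall>i\<in>{1..<n}. g i < \<nu>) \<and> (\<forall>i. i \<notin> {1..<n} \<longrightarrow> g i = 0)}"

definition psi :: "nat \<Rightarrow> nat \<Rightarrow> real" where
  "psi \<nu> a = (if a = 0 then 1 else - 1 / (real \<nu> - 1))"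

definition chidot :: "nat \<Rightarrow> nat \<Rightarrow> nat set \<Rightarrow> (nat \<Rightarrow> nat) \<Rightarrow> real" where
  "chidot \<nu> n I g = (if g \<in> Qcar \<nu> n then (\<Prod>i\<in>{1..<n} - I. psi \<nu> (g i)) else 0)"

definition kappa :: "nat \<Rightarrow> nat \<Rightarrow> nat set \<Rightarrow> (nat \<Rightarrow> nat) \<Rightarrow> real" where
  "kappa \<nu> n I g = (if g \<in> Qcar \<nu> n \<and> {i. g i \<noteq> 0} = I then 1 else 0)"

text \<open>comp({s1<...<si}) = (s1, s2-s1, ..., n-si)\<close>
definition comp :: "nat \<Rightarrow> nat set \<Rightarrow> nat list" where
  "comp n I = (let s = sorted_list_of_set I in map (\<lambda>(a, b). b - a) (zip (0 # s) (s @ [n])))"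

text \<open>Formal power series in the variables x_0, x_1, ... with real coefficients:
  functions from exponent vectors (monomials) to coefficients.\<close>
definition monoQ :: "nat list \<Rightarrow> (nat \<Rightarrow> nat) \<Rightarrow> real" where
  "monoQ \<alpha> m = (if finite {i. m i \<noteq> 0} \<and> map m (sorted_list_of_set {i. m i \<noteq> 0}) = \<alpha>
                 then 1 else 0)"

definition fundQ :: "nat \<Rightarrow> nat set \<Rightarrow> (nat \<Rightarrow> nat) \<Rightarrow> real" where
  "fundQ n I m = (\<Sum>J\<in>{J. I \<subseteq> J \<and> J \<subseteq> {1..<n}}. monoQ (comp n J) m)"

text \<open>The linear map ch: chidot^I \<mapsto> L_comp(I), extended linearly
  (well defined since the chidot^I form a basis of scf).\<close>
definition ch :: "nat \<Rightarrow> nat \<Rightarrow> ((nat \<Rightarrow> nat) \<Rightarrow> real) \<Rightarrow> (nat \<Rightarrow> nat) \<Rightarrow> real" where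
  "ch \<nu> n f = (THE s. \<exists>c. (\<forall>g. f g = (\<Sum>I\<in>Pow {1..<n}. c I * chidot \<nu> n I g))
                          \<and> s = (\<lambda>m. \<Sum>I\<in>Pow {1..<n}. c I * fundQ n I m))"

definition Pi :: "nat \<Rightarrow> nat \<Rightarrow> nat set \<Rightarrow> (nat \<Rightarrow> nat) \<Rightarrow> real" where
  "Pi \<nu> n I = ch \<nu> n (\<lambda>g. kappa \<nu> n I g / (real \<nu> - 1) ^ card I)"

end

theory Submission
  imports Defs
begin

lemma sum_pow_prod:
  fixes F :: "'a \<Rightarrow> bool \<Rightarrow> real"
  assumes "finite S"
  shows "(\<Sum>T\<in>Pow S. \<Prod>i\<in>S. F i (i \<in> T)) = (\<Prod>i\<in>S. F i True + F i False)"
proof -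
  have "(\<Prod>i\<in>S. F i True + F i False) = (\<Sum>T\<in>Pow S. (\<Prod>i\<in>T. F i True) * (\<Prod>i\<in>S-T. F i False))"
    by (rule prod_add[OF assms])
  also have "\<dots> = (\<Sum>T\<in>Pow S. \<Prod>i\<in>S. F i (i \<in> T))"
  proof (rule sum.cong[OF refl])
    fix T assume "T \<in> Pow S"
    then have "S \<inter> {i. i \<in> T} = T" "S - {i. i \<in> T} = S - T" "S \<inter> - T = S - T" by auto
    moreover have "(\<Prod>i\<in>S. F i (i \<in> T)) = (\<Prod>i\<in>S. if i \<in> T then F i True else F i False)"
      by (rule prod.cong) auto
    ultimately show "(\<Prod>i\<in>T. F i True) * (\<Prod>i\<in>S-T. F i False) = (\<Prod>i\<in>S. F i (i \<in> T))"
      by (simp add: prod.If_cases[OF assms])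
  qed
  finally show ?thesis by simp
qed

lemma prod_pow_ind:
  fixes c :: real
  assumes "finite S" "X \<subseteq> S"
  shows "(\<Prod>i\<in>S. if i \<in> X then c else 1) = c ^ card X"
proof -
  have "S \<inter> {i. i \<in> X} = X" using assms by auto
  then show ?thesis by (simp add: prod.If_cases[OF assms(1)])
qed

lemma prod_ind01:
  assumes "finite S"
  shows "(\<Prod>i\<in>S. if P i then 1 else 0) = (if \<forall>i\<in>S. P i then 1 else (0::real))"
  using assms by (auto simp: prod_zero_iff)

lemma chidot_prod:
  assumes "g \<in> Qcar \<nu> n" "T \<subseteq> {1..<n}"
  shows "chidot \<nu> n T g = (\<Prod>i\<in>{1..<n}. if i \<in> T then 1 else psi \<nu> (g i))"
proof -
  have "{1..<n} \<inter> - T = {1..<n} - T" by auto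
  then show ?thesis using assms by (simp add: chidot_def prod.If_cases)
qed

definition Af :: "real \<Rightarrow> bool \<Rightarrow> bool \<Rightarrow> real" where
  "Af x k t = (if t then 1 else if k then x else 1)"
definition Bf :: "real \<Rightarrow> bool \<Rightarrow> bool \<Rightarrow> real" where
  "Bf x t0 k = (if t0 then (if k then 1 else -x) else (if k then -1 else 1))"

lemma key_orth:
  assumes "finite S" "T \<subseteq> S" "T0 \<subseteq> S"
  shows "(\<Sum>K\<in>Pow S. (\<Prod>i\<in>S. Bf x (i \<in> T0) (i \<in> K)) * (\<Prod>i\<in>S. Af x (i \<in> K) (i \<in> T)))
     = (if T = T0 then (1 - x) ^ card S else 0)"
proof -
  have "(\<Sum>K\<in>Pow S. (\<Prod>i\<in>S. Bf x (i \<in> T0) (i \<in> K)) * (\<Prod>i\<in>S. Af x (i \<in> K) (i \<in> T)))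
      = (\<Sum>K\<in>Pow S. \<Prod>i\<in>S. Bf x (i \<in> T0) (i \<in> K) * Af x (i \<in> K) (i \<in> T))"
    by (simp add: prod.distrib)
  also have "\<dots> = (\<Prod>i\<in>S. Bf x (i \<in> T0) True * Af x True (i \<in> T) + Bf x (i \<in> T0) False * Af x False (i \<in> T))"
    using sum_pow_prod[OF assms(1), of "\<lambda>i k. Bf x (i \<in> T0) k * Af x k (i \<in> T)"] by simp
  also have "\<dots> = (\<Prod>i\<in>S. if (i \<in> T0) = (i \<in> T) then 1 - x else 0)"
    by (rule prod.cong) (auto simp: Af_def Bf_def)
  also have "\<dots> = (if T = T0 then (1 - x) ^ card S else 0)"
  proof (cases "T = T0")
    case True then show ?thesis by simp
  next
    case False
    then obtain i where "i \<in> S" "(i \<in> T0) \<noteq> (i \<in> T)" using assms by blast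
    then show ?thesis using False assms(1) by (auto simp: prod_zero_iff intro!: bexI[of _ i])
  qed
  finally show ?thesis .
qed

lemma gK_Qcar:
  assumes "\<nu> > 1" "K \<subseteq> {1..<n}"
  shows "(\<lambda>i. if i \<in> K then 1 else 0::nat) \<in> Qcar \<nu> n"
  using assms by (auto simp: Qcar_def)

lemma chidot_indep:
  assumes "\<nu> > 1" "\<forall>g. (\<Sum>T\<in>Pow {1..<n}. c T * chidot \<nu> n T g) = 0" "T0 \<subseteq> {1..<n}"
  shows "c T0 = 0"
proof -
  define S where "S = {1..<n::nat}"
  define x where "x = psi \<nu> 1"
  have fS: "finite S" by (simp add: S_def)
  have T0S: "T0 \<subseteq> S" using assms(3) by (simp add: S_def)
  have x1: "1 - x \<noteq> 0" using assms(1) by (simp add: x_def psi_def field_simps)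
  have chK: "chidot \<nu> n T (\<lambda>i. if i \<in> K then 1 else 0) = (\<Prod>i\<in>S. Af x (i \<in> K) (i \<in> T))"
    if "K \<subseteq> S" "T \<subseteq> S" for K T
    using chidot_prod[OF gK_Qcar[OF assms(1)], of K n T] that
    by (auto simp: S_def Af_def x_def psi_def intro!: prod.cong)
  have "0 = (\<Sum>K\<in>Pow S. (\<Prod>i\<in>S. Bf x (i \<in> T0) (i \<in> K)) *
              (\<Sum>T\<in>Pow S. c T * chidot \<nu> n T (\<lambda>i. if i \<in> K then 1 else 0)))"
    using assms(2) by (simp add: S_def)
  also have "\<dots> = (\<Sum>K\<in>Pow S. \<Sum>T\<in>Pow S. c T * ((\<Prod>i\<in>S. Bf x (i \<in> T0) (i \<in> K)) *
              (\<Prod>i\<in>S. Af x (i \<in> K) (i \<in> T))))"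
    by (auto simp: sum_distrib_left chK intro!: sum.cong)
  also have "\<dots> = (\<Sum>T\<in>Pow S. c T * (\<Sum>K\<in>Pow S. (\<Prod>i\<in>S. Bf x (i \<in> T0) (i \<in> K)) *
              (\<Prod>i\<in>S. Af x (i \<in> K) (i \<in> T))))"
    by (subst sum.swap) (simp add: sum_distrib_left)
  also have "\<dots> = (\<Sum>T\<in>Pow S. c T * (if T = T0 then (1 - x) ^ card S else 0))"
  proof (rule sum.cong[OF refl])
    fix T assume "T \<in> Pow S"
    then show "c T * (\<Sum>K\<in>Pow S. (\<Prod>i\<in>S. Bf x (i \<in> T0) (i \<in> K)) *
              (\<Prod>i\<in>S. Af x (i \<in> K) (i \<in> T))) = c T * (if T = T0 then (1 - x) ^ card S else 0)"
      using key_orth[OF fS, of T T0 x] T0S by simp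
  qed
  also have "\<dots> = c T0 * (1 - x) ^ card S"
    using T0S fS by (simp add: if_distrib cong: if_cong)
  finally show ?thesis using x1 by simp
qed

lemma ch_eq:
  assumes "\<nu> > 1" "\<forall>g. f g = (\<Sum>T\<in>Pow {1..<n}. c T * chidot \<nu> n T g)"
  shows "ch \<nu> n f = (\<lambda>m. \<Sum>T\<in>Pow {1..<n}. c T * fundQ n T m)"
  unfolding ch_def
proof (rule the_equality)
  show "\<exists>c'. (\<forall>g. f g = (\<Sum>I\<in>Pow {1..<n}. c' I * chidot \<nu> n I g)) \<and>
        (\<lambda>m. \<Sum>T\<in>Pow {1..<n}. c T * fundQ n T m) = (\<lambda>m. \<Sum>I\<in>Pow {1..<n}. c' I * fundQ n I m)"
    using assms(2) by blast
next
  fix s assume "\<exists>c'. (\<forall>g. f g = (\<Sum>I\<in>Pow {1..<n}. c' I * chidot \<nu> n I g)) \<and>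
        s = (\<lambda>m. \<Sum>I\<in>Pow {1..<n}. c' I * fundQ n I m)"
  then obtain c' where c': "\<forall>g. f g = (\<Sum>I\<in>Pow {1..<n}. c' I * chidot \<nu> n I g)"
    "s = (\<lambda>m. \<Sum>I\<in>Pow {1..<n}. c' I * fundQ n I m)" by blast
  have "\<forall>g. (\<Sum>T\<in>Pow {1..<n}. (c T - c' T) * chidot \<nu> n T g) = 0"
    using assms(2) c'(1) by (simp add: left_diff_distrib sum_subtractf)
  then have "c T = c' T" if "T \<in> Pow {1..<n}" for T
    using chidot_indep[OF assms(1), of "\<lambda>T. c T - c' T"] that by auto
  then show "s = (\<lambda>m. \<Sum>T\<in>Pow {1..<n}. c T * fundQ n T m)"
    using c'(2) by (auto intro!: sum.cong)
qed

definition Cf :: "real \<Rightarrow> bool \<Rightarrow> bool \<Rightarrow> real" where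
  "Cf v j t = (if j then (if t then 1/v else -1/v) else (if t then 1/v else (v-1)/v))"
definition Df :: "real \<Rightarrow> bool \<Rightarrow> bool \<Rightarrow> real" where
  "Df v j u = (if j then (if u then 0 else -1/v) else (if u then 1 else (v-1)/v))"

lemma kappa_expand:
  assumes "\<nu> > 1" "J \<subseteq> {1..<n}"
  shows "kappa \<nu> n J g / (real \<nu> - 1) ^ card J =
     (\<Sum>T\<in>Pow {1..<n}. (\<Prod>i\<in>{1..<n}. Cf \<nu> (i \<in> J) (i \<in> T)) * chidot \<nu> n T g)"
proof (cases "g \<in> Qcar \<nu> n")
  case False
  then show ?thesis by (simp add: kappa_def chidot_def)
next
  case True
  define S where "S = {1..<n::nat}"
  have fS: "finite S" by (simp add: S_def)
  have JS: "J \<subseteq> S" using assms(2) by (simp add: S_def)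
  have v1: "real \<nu> - 1 > 0" using assms(1) by simp
  have "(\<Sum>T\<in>Pow {1..<n}. (\<Prod>i\<in>{1..<n}. Cf \<nu> (i \<in> J) (i \<in> T)) * chidot \<nu> n T g)
     = (\<Sum>T\<in>Pow S. \<Prod>i\<in>S. Cf \<nu> (i \<in> J) (i \<in> T) * (if i \<in> T then 1 else psi \<nu> (g i)))"
    using chidot_prod[OF True] by (auto simp: S_def prod.distrib intro!: sum.cong)
  also have "\<dots> = (\<Prod>i\<in>S. Cf \<nu> (i \<in> J) True + Cf \<nu> (i \<in> J) False * psi \<nu> (g i))"
    using sum_pow_prod[OF fS, of "\<lambda>i t. Cf \<nu> (i \<in> J) t * (if t then 1 else psi \<nu> (g i))"] by simp
  also have "\<dots> = (\<Prod>i\<in>S. (if (g i \<noteq> 0) = (i \<in> J) then 1 else 0) * (if i \<in> J then 1 / (real \<nu> - 1) else 1))"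
    using v1 by (intro prod.cong refl) (auto simp: Cf_def psi_def field_simps)
  also have "\<dots> = (if \<forall>i\<in>S. (g i \<noteq> 0) = (i \<in> J) then 1 else 0) * (1 / (real \<nu> - 1)) ^ card J"
    by (simp add: prod.distrib prod_ind01[OF fS] prod_pow_ind[OF fS JS])
  also have "\<dots> = kappa \<nu> n J g / (real \<nu> - 1) ^ card J"
  proof -
    have "(\<forall>i\<in>S. (g i \<noteq> 0) = (i \<in> J)) = ({i. g i \<noteq> 0} = J)"
      using True JS by (auto simp: Qcar_def S_def)
    then show ?thesis using True by (simp add: kappa_def power_one_over)
  qed
  finally show ?thesis by simp
qed

lemma Pi_form:
  assumes "\<nu> > 1" "J \<subseteq> {1..<n}"
  shows "Pi \<nu> n J = (\<lambda>m. \<Sum>U\<in>Pow {1..<n}. (\<Prod>i\<in>{1..<n}. Df \<nu> (i \<in> J) (i \<in> U)) * monoQ (comp n U) m)"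
proof -
  define S where "S = {1..<n::nat}"
  have fS: "finite S" by (simp add: S_def)
  define c where "c T = (\<Prod>i\<in>S. Cf \<nu> (i \<in> J) (i \<in> T))" for T
  have "Pi \<nu> n J = (\<lambda>m. \<Sum>T\<in>Pow S. c T * fundQ n T m)"
    unfolding Pi_def S_def c_def
    by (rule ch_eq[OF assms(1)]) (use kappa_expand[OF assms] in simp)
  moreover have "(\<Sum>T\<in>Pow S. c T * fundQ n T m) = (\<Sum>U\<in>Pow S. (\<Prod>i\<in>S. Df \<nu> (i \<in> J) (i \<in> U)) * monoQ (comp n U) m)" for m
  proof -
    have fq: "fundQ n T m = (\<Sum>U\<in>Pow S. (if T \<subseteq> U then 1 else 0) * monoQ (comp n U) m)" if "T \<in> Pow S" for T
    proof -
      have e: "{J. T \<subseteq> J \<and> J \<subseteq> {1..<n}} = {U \<in> Pow S. T \<subseteq> U}" by (auto simp: S_def)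
      have "fundQ n T m = (\<Sum>U\<in>{U \<in> Pow S. T \<subseteq> U}. monoQ (comp n U) m)"
        unfolding fundQ_def e ..
      also have "\<dots> = (\<Sum>U\<in>Pow S. if T \<subseteq> U then monoQ (comp n U) m else 0)"
        by (rule sum.inter_filter) (simp add: fS)
      also have "\<dots> = (\<Sum>U\<in>Pow S. (if T \<subseteq> U then 1 else 0) * monoQ (comp n U) m)"
        by (intro sum.cong) auto
      finally show ?thesis .
    qed
    have "(\<Sum>T\<in>Pow S. c T * fundQ n T m) = (\<Sum>T\<in>Pow S. \<Sum>U\<in>Pow S. c T * (if T \<subseteq> U then 1 else 0) * monoQ (comp n U) m)"
      by (auto simp: fq sum_distrib_left mult.assoc intro!: sum.cong)
    also have "\<dots> = (\<Sum>U\<in>Pow S. (\<Sum>T\<in>Pow S. c T * (if T \<subseteq> U then 1 else 0)) * monoQ (comp n U) m)"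
      by (subst sum.swap) (simp add: sum_distrib_right)
    also have "\<dots> = (\<Sum>U\<in>Pow S. (\<Prod>i\<in>S. Df \<nu> (i \<in> J) (i \<in> U)) * monoQ (comp n U) m)"
    proof (rule sum.cong[OF refl])
      fix U assume "U \<in> Pow S"
      have "(\<Sum>T\<in>Pow S. c T * (if T \<subseteq> U then 1 else 0)) =
            (\<Sum>T\<in>Pow S. \<Prod>i\<in>S. Cf \<nu> (i \<in> J) (i \<in> T) * (if \<not> (i \<in> T \<and> i \<notin> U) then 1 else 0))"
      proof (rule sum.cong[OF refl])
        fix T assume "T \<in> Pow S"
        then have "(T \<subseteq> U) = (\<forall>i\<in>S. \<not> (i \<in> T \<and> i \<notin> U))" by auto
        then have "(if T \<subseteq> U then 1 else 0) = (\<Prod>i\<in>S. if \<not> (i \<in> T \<and> i \<notin> U) then 1 else (0::real))"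
          by (simp add: prod_ind01[OF fS])
        then show "c T * (if T \<subseteq> U then 1 else 0) = (\<Prod>i\<in>S. Cf \<nu> (i \<in> J) (i \<in> T) * (if \<not> (i \<in> T \<and> i \<notin> U) then 1 else 0))"
          by (simp only: c_def prod.distrib)
      qed
      also have "\<dots> = (\<Prod>i\<in>S. Cf \<nu> (i \<in> J) True * (if \<not> (True \<and> i \<notin> U) then 1 else 0) + Cf \<nu> (i \<in> J) False * (if \<not> (False \<and> i \<notin> U) then 1 else 0))"
        using sum_pow_prod[OF fS, of "\<lambda>i t. Cf \<nu> (i \<in> J) t * (if \<not> (t \<and> i \<notin> U) then 1 else 0)"] by (simp only:)
      also have "\<dots> = (\<Prod>i\<in>S. Df \<nu> (i \<in> J) (i \<in> U))"
        using assms(1) by (intro prod.cong refl) (auto simp: Cf_def Df_def field_simps)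
      finally show "(\<Sum>T\<in>Pow S. c T * (if T \<subseteq> U then 1 else 0)) * monoQ (comp n U) m =
          (\<Prod>i\<in>S. Df \<nu> (i \<in> J) (i \<in> U)) * monoQ (comp n U) m" by simp
    qed
    finally show ?thesis .
  qed
  ultimately show ?thesis by (simp add: S_def)
qed

lemma Dprod_closed:
  fixes \<nu> n :: nat
  assumes "\<nu> > 1" "J \<subseteq> {1..<n}" "U \<subseteq> {1..<n}"
  shows "(\<Prod>i\<in>{1..<n}. Df \<nu> (i \<in> J) (i \<in> U)) =
    (if U \<inter> J = {} then (1 / (1 - real \<nu>)) ^ card J * ((real \<nu> - 1) / real \<nu>) ^ (n - 1 - card U) else 0)"
proof (cases "U \<inter> J = {}")
  case False
  then obtain i where "i \<in> U" "i \<in> J" by blast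
  then show ?thesis using assms by (auto simp: prod_zero_iff Df_def intro!: bexI[of _ i])
next
  case True
  define S where "S = {1..<n::nat}"
  have fS: "finite S" by (simp add: S_def)
  have JS: "J \<subseteq> S" "S - U \<subseteq> S" using assms by (auto simp: S_def)
  have cd: "card (S - U) = n - 1 - card U" using assms(3) by (simp add: S_def card_Diff_subset finite_subset)
  have "(\<Prod>i\<in>S. Df \<nu> (i \<in> J) (i \<in> U)) =
     (\<Prod>i\<in>S. (if i \<in> J then 1 / (1 - real \<nu>) else 1) * (if i \<in> S - U then (real \<nu> - 1) / real \<nu> else 1))"
    using True assms(1) by (intro prod.cong refl) (auto simp: Df_def field_simps)
  also have "\<dots> = (1 / (1 - real \<nu>)) ^ card J * ((real \<nu> - 1) / real \<nu>) ^ (n - 1 - card U)"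
    by (simp only: prod.distrib prod_pow_ind[OF fS JS(1)] prod_pow_ind[OF fS JS(2)] cd)
  finally show ?thesis using True by (simp add: S_def)
qed

definition Ef :: "real \<Rightarrow> bool \<Rightarrow> bool \<Rightarrow> bool \<Rightarrow> real" where
  "Ef v a j u = (if a \<or> j then 1 else 0) * (if j \<and> \<not> a then - v else 1) *
     (if a \<and> j then v - 1 else 1) * Df v j u"

lemma Esum:
  fixes \<nu> n :: nat
  assumes "\<nu> > 1" "I \<subseteq> {1..<n}" "J' \<subseteq> {1..<n}"
  shows "(if I \<union> J' = {1..<n} then (- real \<nu>) ^ card (J' - I) * (real \<nu> - 1) ^ card (I \<inter> J') else 0) *
     (\<Prod>i\<in>{1..<n}. Df \<nu> (i \<in> J') (i \<in> U)) = (\<Prod>i\<in>{1..<n}. Ef \<nu> (i \<in> I) (i \<in> J') (i \<in> U))"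
proof -
  define S where "S = {1..<n::nat}"
  have fS: "finite S" by (simp add: S_def)
  have XS: "J' - I \<subseteq> S" "I \<inter> J' \<subseteq> S" using assms by (auto simp: S_def)
  have u: "(\<forall>i\<in>S. i \<in> I \<or> i \<in> J') = (I \<union> J' = S)" using assms by (auto simp: S_def)
  have "(\<Prod>i\<in>S. Ef \<nu> (i \<in> I) (i \<in> J') (i \<in> U)) =
    (\<Prod>i\<in>S. (if i \<in> I \<or> i \<in> J' then 1 else 0) * (if i \<in> J' - I then - real \<nu> else 1) *
       (if i \<in> I \<inter> J' then real \<nu> - 1 else 1) * Df \<nu> (i \<in> J') (i \<in> U))"
    by (intro prod.cong refl) (simp add: Ef_def)
  also have "\<dots> = (if I \<union> J' = S then 1 else 0) * (- real \<nu>) ^ card (J' - I) * (real \<nu> - 1) ^ card (I \<inter> J') *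
     (\<Prod>i\<in>S. Df \<nu> (i \<in> J') (i \<in> U))"
    by (simp only: prod.distrib prod_ind01[OF fS] prod_pow_ind[OF fS XS(1)] prod_pow_ind[OF fS XS(2)] u)
  finally show ?thesis by (simp add: S_def)
qed

lemma Esum2:
  fixes \<nu> n :: nat
  assumes "\<nu> > 1" "I \<subseteq> {1..<n}" "U \<subseteq> {1..<n}"
  shows "(\<Sum>J'\<in>Pow {1..<n}. \<Prod>i\<in>{1..<n}. Ef \<nu> (i \<in> I) (i \<in> J') (i \<in> U)) = (if U = I then 1 else 0)"
proof -
  have "(\<Sum>J'\<in>Pow {1..<n}. \<Prod>i\<in>{1..<n}. Ef \<nu> (i \<in> I) (i \<in> J') (i \<in> U)) =
     (\<Prod>i\<in>{1..<n}. Ef \<nu> (i \<in> I) True (i \<in> U) + Ef \<nu> (i \<in> I) False (i \<in> U))"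
    using sum_pow_prod[of "{1..<n}" "\<lambda>i j. Ef \<nu> (i \<in> I) j (i \<in> U)"] by simp
  also have "\<dots> = (\<Prod>i\<in>{1..<n}. if (i \<in> I) = (i \<in> U) then 1 else 0)"
    using assms(1) by (intro prod.cong refl) (auto simp: Ef_def Df_def field_simps)
  also have "\<dots> = (if U = I then 1 else 0)"
    using assms(2,3) by (subst prod_ind01) auto
  finally show ?thesis .
qed

theorem lemma4p4:
  fixes \<nu> n :: nat and I J :: "nat set"
  assumes "\<nu> > 1" and "n \<ge> 1" and "I \<subseteq> {1..<n}" and "J \<subseteq> {1..<n}"
  shows "monoQ (comp n I) =
           (\<lambda>m. \<Sum>J'\<in>{J'. J' \<subseteq> {1..<n} \<and> I \<union> J' = {1..<n}}.
                (- real \<nu>) ^ card (J' - I) * (real \<nu> - 1) ^ card (I \<inter> J') * Pi \<nu> n J' m) \<and>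
         Pi \<nu> n J =
           (\<lambda>m. (1 / (1 - real \<nu>)) ^ card J *
                (\<Sum>I'\<in>{I'. I' \<subseteq> {1..<n} \<and> I' \<inter> J = {}}.
                   ((real \<nu> - 1) / real \<nu>) ^ (n - 1 - card I') * monoQ (comp n I') m))"
proof
  define S where "S = {1..<n::nat}"
  have fS: "finite S" by (simp add: S_def)
  show "monoQ (comp n I) =
           (\<lambda>m. \<Sum>J'\<in>{J'. J' \<subseteq> {1..<n} \<and> I \<union> J' = {1..<n}}.
                (- real \<nu>) ^ card (J' - I) * (real \<nu> - 1) ^ card (I \<inter> J') * Pi \<nu> n J' m)"
  proof
    fix m
    define w where "w J' = (if I \<union> J' = S then (- real \<nu>) ^ card (J' - I) * (real \<nu> - 1) ^ card (I \<inter> J') else 0)" for J'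
    have e: "{J'. J' \<subseteq> {1..<n} \<and> I \<union> J' = {1..<n}} = {J' \<in> Pow S. I \<union> J' = S}" by (auto simp: S_def)
    have "(\<Sum>J'\<in>{J'. J' \<subseteq> {1..<n} \<and> I \<union> J' = {1..<n}}.
                (- real \<nu>) ^ card (J' - I) * (real \<nu> - 1) ^ card (I \<inter> J') * Pi \<nu> n J' m)
        = (\<Sum>J'\<in>Pow S. if I \<union> J' = S then (- real \<nu>) ^ card (J' - I) * (real \<nu> - 1) ^ card (I \<inter> J') * Pi \<nu> n J' m else 0)"
      unfolding e by (rule sum.inter_filter) (simp add: fS)
    also have "\<dots> = (\<Sum>J'\<in>Pow S. \<Sum>U\<in>Pow S. (w J' * (\<Prod>i\<in>S. Df \<nu> (i \<in> J') (i \<in> U))) * monoQ (comp n U) m)"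
    proof (rule sum.cong[OF refl])
      fix J' assume "J' \<in> Pow S"
      then have "J' \<subseteq> {1..<n}" by (simp add: S_def)
      then show "(if I \<union> J' = S then (- real \<nu>) ^ card (J' - I) * (real \<nu> - 1) ^ card (I \<inter> J') * Pi \<nu> n J' m else 0) =
          (\<Sum>U\<in>Pow S. (w J' * (\<Prod>i\<in>S. Df \<nu> (i \<in> J') (i \<in> U))) * monoQ (comp n U) m)"
        using Pi_form[OF assms(1), of J' n] by (simp add: w_def S_def sum_distrib_left mult.assoc)
    qed
    also have "\<dots> = (\<Sum>U\<in>Pow S. (\<Sum>J'\<in>Pow S. w J' * (\<Prod>i\<in>S. Df \<nu> (i \<in> J') (i \<in> U))) * monoQ (comp n U) m)"
      by (subst sum.swap) (simp add: sum_distrib_right)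
    also have "\<dots> = (\<Sum>U\<in>Pow S. (if U = I then 1 else 0) * monoQ (comp n U) m)"
    proof (rule sum.cong[OF refl])
      fix U assume U: "U \<in> Pow S"
      have "(\<Sum>J'\<in>Pow S. w J' * (\<Prod>i\<in>S. Df \<nu> (i \<in> J') (i \<in> U))) =
            (\<Sum>J'\<in>Pow S. \<Prod>i\<in>S. Ef \<nu> (i \<in> I) (i \<in> J') (i \<in> U))"
        using Esum[OF assms(1,3)] by (auto simp: w_def S_def intro!: sum.cong)
      also have "\<dots> = (if U = I then 1 else 0)"
        using Esum2[OF assms(1,3)] U by (simp add: S_def)
      finally show "(\<Sum>J'\<in>Pow S. w J' * (\<Prod>i\<in>S. Df \<nu> (i \<in> J') (i \<in> U))) * monoQ (comp n U) m =
         (if U = I then 1 else 0) * monoQ (comp n U) m" by simp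
    qed
    also have "\<dots> = (\<Sum>U\<in>Pow S. if U = I then monoQ (comp n U) m else 0)"
      by (intro sum.cong) auto
    also have "\<dots> = monoQ (comp n I) m"
      using assms(3) fS by (simp add: S_def)
    finally show "monoQ (comp n I) m = (\<Sum>J'\<in>{J'. J' \<subseteq> {1..<n} \<and> I \<union> J' = {1..<n}}.
                (- real \<nu>) ^ card (J' - I) * (real \<nu> - 1) ^ card (I \<inter> J') * Pi \<nu> n J' m)" by simp
  qed
  show "Pi \<nu> n J =
           (\<lambda>m. (1 / (1 - real \<nu>)) ^ card J *
                (\<Sum>I'\<in>{I'. I' \<subseteq> {1..<n} \<and> I' \<inter> J = {}}.
                   ((real \<nu> - 1) / real \<nu>) ^ (n - 1 - card I') * monoQ (comp n I') m))"
  proof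
    fix m
    have e: "{I'. I' \<subseteq> {1..<n} \<and> I' \<inter> J = {}} = {U \<in> Pow S. U \<inter> J = {}}" by (auto simp: S_def)
    have "(1 / (1 - real \<nu>)) ^ card J *
                (\<Sum>I'\<in>{I'. I' \<subseteq> {1..<n} \<and> I' \<inter> J = {}}.
                   ((real \<nu> - 1) / real \<nu>) ^ (n - 1 - card I') * monoQ (comp n I') m)
       = (1 / (1 - real \<nu>)) ^ card J * (\<Sum>U\<in>Pow S. if U \<inter> J = {} then
                   ((real \<nu> - 1) / real \<nu>) ^ (n - 1 - card U) * monoQ (comp n U) m else 0)"
      unfolding e by (subst sum.inter_filter) (simp_all add: fS)
    also have "\<dots> = (\<Sum>U\<in>Pow S. (\<Prod>i\<in>{1..<n}. Df \<nu> (i \<in> J) (i \<in> U)) * monoQ (comp n U) m)"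
      unfolding sum_distrib_left
    proof (rule sum.cong[OF refl])
      fix U assume "U \<in> Pow S"
      then have Us: "U \<subseteq> {1..<n}" by (simp add: S_def)
      show "(1 / (1 - real \<nu>)) ^ card J * (if U \<inter> J = {} then
                   ((real \<nu> - 1) / real \<nu>) ^ (n - 1 - card U) * monoQ (comp n U) m else 0) =
          (\<Prod>i\<in>{1..<n}. Df \<nu> (i \<in> J) (i \<in> U)) * monoQ (comp n U) m"
        unfolding Dprod_closed[OF assms(1,4) Us] by simp
    qed
    also have "\<dots> = Pi \<nu> n J m"
      by (simp add: Pi_form[OF assms(1,4)] S_def)
    finally show "Pi \<nu> n J m = (1 / (1 - real \<nu>)) ^ card J *
                (\<Sum>I'\<in>{I'. I' \<subseteq> {1..<n} \<and> I' \<inter> J = {}}.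
                   ((real \<nu> - 1) / real \<nu>) ^ (n - 1 - card I') * monoQ (comp n I') m)" by simp
  qed
qed

end
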